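(* Let $n\ge 2$ be an integer and $A\subseteq L_n$. The following are equivalent: (i) $(X_n,\tau(A))$ is hereditarily Lindelöf; (ii) $|L_n\setminus A|\le\aleph_0$; (iii) $(X_n,\tau(A))$ is second-countable; (iv) $(X_n,\tau(A))$ is metrizable.
   Context: For $\overline{x},\overline{a}\in\mathbb R^n$ let $|\overline{x}-\overline{a}|$ be the Euclidean distance and $B(\overline{a},\epsilon)=\{\overline{x}\in\mathbb R^n:|\overline{x}-\overline{a}|<\epsilon\}$. Let $P_n=\{\overline{x}\in\mathbb R^n: x_n>0\}$, $L_n=\{\overline{x}\in\mathbb R^n: x_n=0\}$, $X_n=P_n\cup L_n$. For $\overline{a}\in L_n$ and $\epsilon>0$ put $\overline{a(\epsilon)}=(a_1,\dots,a_{n-1},\epsilon)$ and $\tilde B(\overline{a},\epsilon)=\{\overline{a}\}\cup B(\overline{a(\epsilon)},\epsilon)$. For $A\subseteq L_n$, the topology $\tau(A)$ on $X_n$ is generated by the local bases: at $\overline{a}\in P_n$, the sets $B(\overline{a},\epsilon)$ with $0<\epsilon<a_n$; at $\overline{a}\in A$, the sets $B(\overline{a},\epsilon)\cap X_n$ with $\epsilon>0$; at $\overline{a}\in L_n\setminus A$, the sets $\tilde B(\overline{a},\epsilon)$ with $\epsilon>0$. *)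

theory Defs
  imports "HOL-Analysis.Analysis"
begin

text \<open>We model Euclidean space R^n (n >= 2) as the product (real^'m) \<times> real, where
  CARD('m) = n - 1 >= 1.  The product metric on this type is exactly the Euclidean
  distance of R^n, and the last coordinate x_n is the second component.\<close>

definition Pn :: "((real^'m) \<times> real) set" where
  "Pn = {x. snd x > 0}"

definition Ln :: "((real^'m) \<times> real) set" where
  "Ln = {x. snd x = 0}"

definition Xn :: "((real^'m) \<times> real) set" where
  "Xn = Pn \<union> Ln"

definition tball :: "(real^'m) \<times> real \<Rightarrow> real \<Rightarrow> ((real^'m) \<times> real) set" where
  "tball a e = insert a (ball (fst a, e) e)"

definition basic_nbhd ::
  "((real^'m) \<times> real) set \<Rightarrow> (real^'m) \<times> real \<Rightarrow> ((real^'m) \<times> real) set \<Rightarrow> bool" where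
  "basic_nbhd A a V \<longleftrightarrow>
     (a \<in> Pn \<and> (\<exists>e. 0 < e \<and> e < snd a \<and> V = ball a e)) \<or>
     (a \<in> A \<and> (\<exists>e>0. V = ball a e \<inter> Xn)) \<or>
     (a \<in> Ln - A \<and> (\<exists>e>0. V = tball a e))"

definition tauA :: "((real^'m) \<times> real) set \<Rightarrow> ((real^'m) \<times> real) topology" where
  "tauA A = topology (\<lambda>U. U \<subseteq> Xn \<and> (\<forall>x\<in>U. \<exists>V. basic_nbhd A x V \<and> V \<subseteq> U))"

definition hereditarily_Lindelof :: "'a topology \<Rightarrow> bool" where
  "hereditarily_Lindelof X \<longleftrightarrow> (\<forall>S \<subseteq> topspace X. Lindelof_space (subtopology X S))"

end

theory Submission
  imports Defs "HOL-Analysis.Analysis"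
begin

lemma dist_sq: "(dist (x::(real^'m) \<times> real) y)^2 = (dist (fst x) (fst y))^2 + (snd x - snd y)^2"
  unfolding dist_prod_def by (simp add: dist_real_def power2_abs)

lemma dist_lt_iff: assumes "r > 0" shows "dist (x::(real^'m) \<times> real) y < r \<longleftrightarrow> (dist (fst x) (fst y))^2 + (snd x - snd y)^2 < r^2"
proof -
  have "dist x y < r \<longleftrightarrow> (dist x y)^2 < r^2"
    by (meson power_less_imp_less_base power_strict_mono zero_le_dist less_imp_le \<open>r > 0\<close> zero_less_numeral)
  then show ?thesis by (simp add: dist_sq)
qed

lemma dist_le_iff: assumes "r \<ge> 0" shows "dist (x::(real^'m) \<times> real) y \<le> r \<longleftrightarrow> (dist (fst x) (fst y))^2 + (snd x - snd y)^2 \<le> r^2"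
proof -
  have "dist x y \<le> r \<longleftrightarrow> (dist x y)^2 \<le> r^2"
    using \<open>r \<ge> 0\<close> by (meson power_mono power2_le_imp_le zero_le_dist)
  then show ?thesis by (simp add: dist_sq)
qed

lemma ball_sub_Pn: "r > 0 \<Longrightarrow> ball (c, r) r \<subseteq> (Pn :: ((real^'m) \<times> real) set)"
proof
  fix z :: "(real^'m) \<times> real" assume "r > 0" "z \<in> ball (c, r) r"
  then have "dist (snd (c,r)) (snd z) < r" using dist_snd_le[of "(c,r)" z] by auto
  then show "z \<in> Pn" unfolding Pn_def by (auto simp: dist_real_def)
qed

lemma Pn_Ln_disj: "x \<in> Pn \<Longrightarrow> x \<notin> Ln" unfolding Pn_def Ln_def by auto

lemma tball_mono:
  assumes "0 < d" "d \<le> e"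
  shows "tball (a::(real^'m) \<times> real) d \<subseteq> tball a e"
proof
  fix y assume "y \<in> tball a d"
  then consider "y = a" | "dist (fst a, d) y < d" unfolding tball_def by auto
  then show "y \<in> tball a e"
  proof cases
    case 1 then show ?thesis unfolding tball_def by auto
  next
    case 2
    have "dist (fst a, e) (fst a, d) = e - d" using assms
      by (simp add: dist_prod_def dist_real_def)
    then have "dist (fst a, e) y < e" using dist_triangle[of "(fst a, e)" y "(fst a, d)"] 2 by auto
    then show ?thesis unfolding tball_def by auto
  qed
qed

lemma tball_sub_ball:
  assumes "snd a = 0" "e > 0"
  shows "tball (a::(real^'m) \<times> real) e \<subseteq> ball a (2*e)"
proof
  fix y assume "y \<in> tball a e"
  then consider "y = a" | "dist (fst a, e) y < e" unfolding tball_def by auto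
  then show "y \<in> ball a (2*e)"
  proof cases
    case 1 then show ?thesis using assms by auto
  next
    case 2
    have "dist a (fst a, e) = sqrt ((dist (fst a) (fst a))^2 + (dist (snd a) e)^2)"
      by (simp add: dist_prod_def)
    also have "\<dots> = e" using assms by (simp add: dist_real_def)
    finally have "dist a (fst a, e) = e" .
    then show ?thesis using dist_triangle[of a y "(fst a, e)"] 2 by auto
  qed
qed

lemma tball_closure_geom:
  assumes a: "snd a = 0" and r: "r > 0" and z: "snd z \<ge> 0" and d: "dist (fst a, r) z \<le> r"
  shows "z \<in> tball (a::(real^'m) \<times> real) (2*r)"
proof -
  let ?D = "dist (fst a) (fst z)" and ?t = "snd z"
  have h: "?D^2 + (r - ?t)^2 \<le> r^2" using dist_le_iff[of r "(fst a, r)" z] r d by simp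
  show ?thesis
  proof (cases "?t = 0")
    case True
    then have "?D^2 \<le> 0" using h by simp
    then have "fst z = fst a" by simp
    then have "z = a" using True a by (simp add: prod_eq_iff)
    then show ?thesis unfolding tball_def by auto
  next
    case False
    then have "?t > 0" using z by simp
    have rt: "r * ?t > 0" using r \<open>?t > 0\<close> by simp
    have e1: "(r - ?t)^2 = r^2 - 2*(r*?t) + ?t^2" by (simp add: power2_eq_square algebra_simps)
    have e2: "(2*r - ?t)^2 = 4*r^2 - 4*(r*?t) + ?t^2" by (simp add: power2_eq_square algebra_simps)
    have e3: "(2*r)^2 = 4*r^2" by (simp add: power2_eq_square)
    have "?D^2 + (2*r - ?t)^2 < (2*r)^2" using h rt unfolding e1 e2 e3 by linarith
    then have "dist (fst a, 2*r) z < 2*r" using dist_lt_iff[of "2*r" "(fst a, 2*r)" z] r by simp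
    then show ?thesis unfolding tball_def by auto
  qed
qed

lemma ball_sub_Pn2: "e \<le> snd x \<Longrightarrow> ball (x::(real^'m) \<times> real) e \<subseteq> Pn"
proof
  fix z assume "e \<le> snd x" "z \<in> ball x e"
  then have "dist (snd x) (snd z) < e" using dist_snd_le[of x z] by auto
  then show "z \<in> Pn" using \<open>e \<le> snd x\<close> unfolding Pn_def by (auto simp: dist_real_def)
qed

lemma Ln_snd: "x \<in> Ln \<longleftrightarrow> snd x = 0" unfolding Ln_def by simp
lemma Pn_snd: "x \<in> Pn \<longleftrightarrow> snd x > 0" unfolding Pn_def by simp
lemma Xn_snd: "x \<in> Xn \<longleftrightarrow> snd x \<ge> 0" unfolding Xn_def Ln_def Pn_def by auto

lemma basic_in_Xn: "A \<subseteq> Ln \<Longrightarrow> basic_nbhd A x V \<Longrightarrow> x \<in> Xn"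
  unfolding basic_nbhd_def Xn_def by auto

lemma basic_mem: "A \<subseteq> Ln \<Longrightarrow> basic_nbhd A x V \<Longrightarrow> x \<in> V"
  unfolding basic_nbhd_def using basic_in_Xn[of A x V] by (auto simp: tball_def Xn_def)

lemma basic_sub_Xn: "basic_nbhd A x V \<Longrightarrow> V \<subseteq> Xn"
proof -
  assume b: "basic_nbhd A x V"
  consider (P) e where "x \<in> Pn" "0 < e" "e < snd x" "V = ball x e"
    | (A) e where "e > 0" "V = ball x e \<inter> Xn"
    | (L) e where "x \<in> Ln - A" "e > 0" "V = tball x e"
    using b unfolding basic_nbhd_def by blast
  then show ?thesis
  proof cases
    case P then show ?thesis using ball_sub_Pn2[of e x] by (auto simp: Xn_def)
  next
    case A then show ?thesis by auto
  next
    case L then show ?thesis using ball_sub_Pn[of e "fst x"] by (auto simp: Xn_def tball_def)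
  qed
qed

lemma basic_P: "A \<subseteq> Ln \<Longrightarrow> x \<in> Pn \<Longrightarrow> basic_nbhd A x V \<Longrightarrow> \<exists>e. 0 < e \<and> e < snd x \<and> V = ball x e"
  unfolding basic_nbhd_def using Pn_Ln_disj by blast
lemma basic_A: "x \<in> A \<Longrightarrow> A \<subseteq> Ln \<Longrightarrow> basic_nbhd A x V \<Longrightarrow> \<exists>e>0. V = ball x e \<inter> Xn"
  unfolding basic_nbhd_def using Pn_Ln_disj by blast
lemma basic_L: "x \<in> Ln - A \<Longrightarrow> basic_nbhd A x V \<Longrightarrow> \<exists>e>0. V = tball x e"
  unfolding basic_nbhd_def using Pn_Ln_disj by blast

lemma G:
  assumes A: "A \<subseteq> Ln" and S: "open S" "x \<in> S" and x: "x \<in> Xn"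
  shows "\<exists>W. basic_nbhd A x W \<and> W \<subseteq> S"
proof -
  obtain e where e: "e > 0" "ball x e \<subseteq> S" using S open_contains_ball by blast
  consider "x \<in> Pn" | "x \<in> A" | "x \<in> Ln - A" using x unfolding Xn_def by auto
  then show ?thesis
  proof cases
    case 1
    define e' where "e' = min e (snd x / 2)"
    have "0 < e'" "e' < snd x" using e 1 unfolding e'_def Pn_def by auto
    moreover have "ball x e' \<subseteq> S" using e unfolding e'_def by auto
    ultimately show ?thesis using 1 unfolding basic_nbhd_def by blast
  next
    case 2
    then show ?thesis using e unfolding basic_nbhd_def by blast
  next
    case 3
    have "tball x (e/2) \<subseteq> ball x (2*(e/2))"
      by (rule tball_sub_ball) (use 3 e in \<open>auto simp: Ln_def\<close>)
    then have "tball x (e/2) \<subseteq> S" using e by auto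
    moreover have "basic_nbhd A x (tball x (e/2))" unfolding basic_nbhd_def
      apply (rule disjI2, rule disjI2) using 3 e by (auto intro!: exI[of _ "e/2"])
    ultimately show ?thesis by blast
  qed
qed

lemma nest:
  assumes AL: "A \<subseteq> Ln" and b1: "basic_nbhd A x V1" and b2: "basic_nbhd A x V2"
  shows "\<exists>V. basic_nbhd A x V \<and> V \<subseteq> V1 \<and> V \<subseteq> V2"
proof -
  have "x \<in> Pn \<or> x \<in> A \<or> x \<in> Ln - A"
    using b1 unfolding basic_nbhd_def by blast
  moreover
  { assume 1: "x \<in> Pn"
    obtain e1 where "0<e1" "e1 < snd x" "V1 = ball x e1" using basic_P[OF AL 1 b1] by blast
    obtain e2 where "0<e2" "e2 < snd x" "V2 = ball x e2" using basic_P[OF AL 1 b2] by blast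
    have m: "0 < min e1 e2" "min e1 e2 < snd x" using \<open>0<e1\<close> \<open>0<e2\<close> \<open>e1 < snd x\<close> by auto
    have "basic_nbhd A x (ball x (min e1 e2))" unfolding basic_nbhd_def
      using 1 m by blast
    moreover have "ball x (min e1 e2) \<subseteq> V1" "ball x (min e1 e2) \<subseteq> V2"
      using \<open>V1 = ball x e1\<close> \<open>V2 = ball x e2\<close> by (simp_all add: subset_ball)
    ultimately have ?thesis by blast }
  moreover
  { assume 2: "x \<in> A"
    obtain e1 where "0<e1" "V1 = ball x e1 \<inter> Xn" using basic_A[OF 2 AL b1] by blast
    obtain e2 where "0<e2" "V2 = ball x e2 \<inter> Xn" using basic_A[OF 2 AL b2] by blast
    have m: "0 < min e1 e2" using \<open>0<e1\<close> \<open>0<e2\<close> by auto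
    have "basic_nbhd A x (ball x (min e1 e2) \<inter> Xn)" unfolding basic_nbhd_def
      using 2 m by blast
    moreover have "ball x (min e1 e2) \<subseteq> ball x e1" "ball x (min e1 e2) \<subseteq> ball x e2"
      by (simp_all add: subset_ball)
    ultimately have ?thesis using \<open>V1 = _\<close> \<open>V2 = _\<close> by blast }
  moreover
  { assume 3: "x \<in> Ln - A"
    obtain e1 where "0<e1" "V1 = tball x e1" using basic_L[OF 3 b1] by blast
    obtain e2 where "0<e2" "V2 = tball x e2" using basic_L[OF 3 b2] by blast
    have m: "0 < min e1 e2" using \<open>0<e1\<close> \<open>0<e2\<close> by auto
    have "tball x (min e1 e2) \<subseteq> tball x e1" "tball x (min e1 e2) \<subseteq> tball x e2"
      by (rule tball_mono; use m in auto)+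
    moreover have "basic_nbhd A x (tball x (min e1 e2))" unfolding basic_nbhd_def
      using 3 m by blast
    ultimately have ?thesis using \<open>V1 = _\<close> \<open>V2 = _\<close> by blast }
  ultimately show ?thesis by blast
qed

lemma istop: fixes A :: "((real^'m) \<times> real) set" assumes AL: "A \<subseteq> Ln" shows "istopology (\<lambda>U. U \<subseteq> Xn \<and> (\<forall>x\<in>U. \<exists>V. basic_nbhd A x V \<and> V \<subseteq> U))"
  unfolding istopology_def
proof (rule conjI; intro allI impI)
  fix S T :: "((real^'m) \<times> real) set"
  assume S: "S \<subseteq> Xn \<and> (\<forall>x\<in>S. \<exists>V. basic_nbhd A x V \<and> V \<subseteq> S)"
     and T: "T \<subseteq> Xn \<and> (\<forall>x\<in>T. \<exists>V. basic_nbhd A x V \<and> V \<subseteq> T)"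
  show "S \<inter> T \<subseteq> Xn \<and> (\<forall>x\<in>S \<inter> T. \<exists>V. basic_nbhd A x V \<and> V \<subseteq> S \<inter> T)"
  proof (intro conjI ballI)
    show "S \<inter> T \<subseteq> Xn" using S by auto
    fix x assume "x \<in> S \<inter> T"
    then have "x \<in> S" "x \<in> T" by auto
    then obtain V1 V2 where "basic_nbhd A x V1" "V1 \<subseteq> S" "basic_nbhd A x V2" "V2 \<subseteq> T"
      using S T by metis
    then obtain V where "basic_nbhd A x V" "V \<subseteq> V1" "V \<subseteq> V2" using nest[OF AL] by metis
    then show "\<exists>V. basic_nbhd A x V \<and> V \<subseteq> S \<inter> T" using \<open>V1 \<subseteq> S\<close> \<open>V2 \<subseteq> T\<close> by blast
  qed
next
  fix K :: "((real^'m) \<times> real) set set"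
  assume H: "\<forall>U\<in>K. U \<subseteq> Xn \<and> (\<forall>x\<in>U. \<exists>V. basic_nbhd A x V \<and> V \<subseteq> U)"
  show "\<Union>K \<subseteq> Xn \<and> (\<forall>x\<in>\<Union>K. \<exists>V. basic_nbhd A x V \<and> V \<subseteq> \<Union>K)"
  proof (intro conjI ballI)
    show "\<Union>K \<subseteq> Xn" using H by (simp add: Sup_le_iff)
    fix x assume "x \<in> \<Union>K"
    then obtain U where U: "U \<in> K" "x \<in> U" by (rule UnionE)
    then obtain V where "basic_nbhd A x V" "V \<subseteq> U" using H by metis
    then show "\<exists>V. basic_nbhd A x V \<and> V \<subseteq> \<Union>K" using U by (meson Union_upper order_trans)
  qed
qed

lemma openin_tauA: assumes AL: "A \<subseteq> Ln" shows "openin (tauA A) U \<longleftrightarrow> U \<subseteq> Xn \<and> (\<forall>x\<in>U. \<exists>V. basic_nbhd A x V \<and> V \<subseteq> U)"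
proof -
  have "openin (tauA A) = (\<lambda>U. U \<subseteq> Xn \<and> (\<forall>x\<in>U. \<exists>V. basic_nbhd A x V \<and> V \<subseteq> U))"
    unfolding tauA_def by (rule topology_inverse'[OF istop[OF AL]])
  then show ?thesis by (rule fun_cong)
qed

lemma openE:
  assumes A: "A \<subseteq> Ln" and "open S"
  shows "openin (tauA A) (S \<inter> Xn)"
  unfolding openin_tauA[OF A]
proof (intro conjI ballI)
  show "S \<inter> Xn \<subseteq> Xn" by auto
  fix x assume "x \<in> S \<inter> Xn"
  then obtain W where "basic_nbhd A x W" "W \<subseteq> S" using G[OF A \<open>open S\<close>] by blast
  then show "\<exists>V. basic_nbhd A x V \<and> V \<subseteq> S \<inter> Xn" using basic_sub_Xn by blast
qed

lemma basic_open:
  assumes A: "A \<subseteq> Ln" and b: "basic_nbhd A x V"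
  shows "openin (tauA A) V"
proof -
  consider (P) e where "x \<in> Pn" "0 < e" "e < snd x" "V = ball x e"
    | (A) e where "e > 0" "V = ball x e \<inter> Xn"
    | (L) e where "x \<in> Ln - A" "e > 0" "V = tball x e"
    using b unfolding basic_nbhd_def by blast
  then show ?thesis
  proof cases
    case P
    then have "V = ball x e \<inter> Xn" using ball_sub_Pn2[of e x] by (auto simp: Xn_def)
    then show ?thesis using openE[OF A] by simp
  next
    case A
    then show ?thesis using openE[OF assms(1)] by simp
  next
    case L
    show ?thesis unfolding openin_tauA[OF assms(1)]
    proof (intro conjI ballI)
      show "V \<subseteq> Xn" using b basic_sub_Xn by blast
      fix y assume "y \<in> V"
      show "\<exists>V'. basic_nbhd A y V' \<and> V' \<subseteq> V"
      proof (cases "y = x")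
        case True then show ?thesis using b by blast
      next
        case False
        then have y: "y \<in> ball (fst x, e) e" using \<open>y \<in> V\<close> L unfolding tball_def by auto
        then have "y \<in> Xn" using ball_sub_Pn[of e "fst x"] L by (auto simp: Xn_def)
        then obtain W where "basic_nbhd A y W" "W \<subseteq> ball (fst x, e) e"
          using G[OF assms(1) open_ball y] by blast
        then show ?thesis using L unfolding tball_def by blast
      qed
    qed
  qed
qed

lemma topspace_tauA: "A \<subseteq> Ln \<Longrightarrow> topspace (tauA A) = Xn"
proof -
  assume A: "A \<subseteq> Ln"
  have "openin (tauA A) Xn" using openE[OF A open_UNIV] by simp
  then have "Xn \<subseteq> topspace (tauA A)" by (rule openin_subset)
  moreover have "topspace (tauA A) \<subseteq> Xn" using openin_tauA[OF A, of "topspace (tauA A)"] by simp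
  ultimately show ?thesis by blast
qed

lemma closure_tauA:
  assumes A: "A \<subseteq> Ln" and S: "S \<subseteq> Xn"
  shows "tauA A closure_of S \<subseteq> Xn \<inter> closure S"
proof (rule closure_of_minimal)
  show "S \<subseteq> Xn \<inter> closure S" using S closure_subset by auto
  have "openin (tauA A) (- closure S \<inter> Xn)" using openE[OF A, of "- closure S"] by (meson closed_closure open_Compl)
  moreover have "topspace (tauA A) - Xn \<inter> closure S = - closure S \<inter> Xn"
    using topspace_tauA[OF A] by auto
  ultimately show "closedin (tauA A) (Xn \<inter> closure S)"
    unfolding closedin_def using topspace_tauA[OF A] by auto
qed

lemma regular_nbhd:
  assumes "regular_space X" "openin X W" "x \<in> W"
  obtains U where "openin X U" "x \<in> U" "X closure_of U \<subseteq> W"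
proof -
  obtain U V where "openin X U" "closedin X V" "x \<in> U" "U \<subseteq> V" "V \<subseteq> W"
    using assms neighbourhood_base_of_closedin[of X] unfolding neighbourhood_base_of by blast
  then have "X closure_of U \<subseteq> W"
    by (meson closure_of_minimal order_trans)
  then show ?thesis using that \<open>openin X U\<close> \<open>x \<in> U\<close> by blast
qed

lemma Urysohn_metrization:
  assumes reg: "regular_space X" and sc: "second_countable X" and t1: "t1_space X"
  shows "metrizable_space X"
proof -
  obtain \<B> where cB: "countable \<B>" and oB: "\<forall>V \<in> \<B>. openin X V"
    and bB: "\<forall>U x. openin X U \<and> x \<in> U \<longrightarrow> (\<exists>V \<in> \<B>. x \<in> V \<and> V \<subseteq> U)"
    using sc unfolding second_countable_def by blast
  have nor: "normal_space X"
    using regular_second_countable_imp_hereditarily_normal_space[of X] reg sc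
    unfolding hereditarily_def by (metis subtopology_topspace order_refl)
  define P where "P = {(B1,B2). B1 \<in> \<B> \<and> B2 \<in> \<B> \<and> X closure_of B1 \<subseteq> B2}"
  have cP: "countable P"
  proof -
    have "P \<subseteq> \<B> \<times> \<B>" unfolding P_def by auto
    moreover have "countable (\<B> \<times> \<B>)" using cB by simp
    ultimately show ?thesis by (rule countable_subset)
  qed
  have "\<exists>f. continuous_map X (top_of_set {0..1::real}) f \<and> f ` (X closure_of fst p) \<subseteq> {0}
            \<and> f ` (topspace X - snd p) \<subseteq> {1}" if "p \<in> P" for p
  proof -
    obtain B1 B2 where p: "p = (B1,B2)" "B1 \<in> \<B>" "B2 \<in> \<B>" "X closure_of B1 \<subseteq> B2"
      using \<open>p \<in> P\<close> unfolding P_def by auto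
    have "closedin X (topspace X - B2)" using oB p by auto
    moreover have "disjnt (X closure_of B1) (topspace X - B2)"
      using p by (auto simp: disjnt_def)
    ultimately obtain f where "continuous_map X (top_of_set {0..1::real}) f"
       "f ` (X closure_of B1) \<subseteq> {0}" "f ` (topspace X - B2) \<subseteq> {1}"
      using Urysohn_lemma[OF nor, of "X closure_of B1" "topspace X - B2" 0 1] by auto
    then show ?thesis using p by auto
  qed
  then obtain f where f: "\<And>p. p \<in> P \<Longrightarrow> continuous_map X (top_of_set {0..1::real}) (f p) \<and>
      (f p) ` (X closure_of fst p) \<subseteq> {0} \<and> (f p) ` (topspace X - snd p) \<subseteq> {1}"
    by metis
  define F where "F x = (\<lambda>p. if p \<in> P then f p x else undefined)" for x
  define Y where "Y = product_topology (\<lambda>_. euclideanreal) P"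
  have key: "\<exists>p\<in>P. x \<in> fst p \<and> snd p \<subseteq> U" if UU: "openin X U" "x \<in> U" for U x
  proof -
    obtain B2 where B2: "B2 \<in> \<B>" "x \<in> B2" "B2 \<subseteq> U" using bB[rule_format, OF conjI[OF UU]] by blast
    obtain V where V: "openin X V" "x \<in> V" "X closure_of V \<subseteq> B2"
      using regular_nbhd[OF reg, of B2 x] oB B2 by metis
    obtain B1 where B1: "B1 \<in> \<B>" "x \<in> B1" "B1 \<subseteq> V" using bB[rule_format, OF conjI[OF V(1,2)]] by blast
    have "X closure_of B1 \<subseteq> B2" using B1 V closure_of_mono by blast
    then have "(B1,B2) \<in> P" using B1 B2 unfolding P_def by auto
    then show ?thesis using B1 B2 by force
  qed
  have f0: "f p x = 0" if p: "p \<in> P" "x \<in> fst p" for p x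
  proof -
    have "fst p \<in> \<B>" using p(1) unfolding P_def by auto
    then have "fst p \<subseteq> topspace X" using oB openin_subset by blast
    then have "x \<in> X closure_of fst p" using closure_of_subset p(2) by blast
    then show ?thesis using f[OF p(1)] by blast
  qed
  have f1: "f p x = 1" if "p \<in> P" "x \<in> topspace X" "x \<notin> snd p" for p x
    using f[OF that(1)] that(2,3) by auto
  have cont: "continuous_map X Y F"
    unfolding Y_def F_def continuous_map_componentwise
  proof (intro conjI ballI)
    show "(\<lambda>x p. if p \<in> P then f p x else undefined) ` topspace X \<subseteq> extensional P"
      by (auto simp: extensional_def)
    fix k assume "k \<in> P"
    then show "continuous_map X euclideanreal (\<lambda>x. if k \<in> P then f k x else undefined)"
      using f[of k] continuous_map_in_subtopology by auto
  qed
  have inj: "inj_on F (topspace X)"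
  proof (rule inj_onI, rule ccontr)
    fix x y assume xy: "x \<in> topspace X" "y \<in> topspace X" "F x = F y" "x \<noteq> y"
    obtain U where U: "openin X U" "x \<in> U" "y \<notin> U" using t1 xy unfolding t1_space_def by blast
    obtain p where p: "p \<in> P" "x \<in> fst p" "snd p \<subseteq> U" using key[OF U(1,2)] by blast
    have "F x p = 0" using f0 p unfolding F_def by auto
    moreover have "F y p = 1" using f1[of p y] p U xy unfolding F_def by auto
    ultimately show False using xy by simp
  qed
  have opn: "open_map X (subtopology Y (F ` topspace X)) F"
    unfolding open_map_def
  proof (intro allI impI)
    fix U assume U: "openin X U"
    show "openin (subtopology Y (F ` topspace X)) (F ` U)"
    proof (subst openin_subopen, intro ballI)
      fix z assume "z \<in> F ` U"
      then obtain x where x: "x \<in> U" "z = F x" by blast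
      obtain p where p: "p \<in> P" "x \<in> fst p" "snd p \<subseteq> U" using key[OF U x(1)] by blast
      define T where "T = {w \<in> topspace Y. w p \<in> {..<1}}"
      have "openin Y T" unfolding T_def Y_def
        by (rule openin_continuous_map_preimage[OF continuous_map_product_projection[OF p(1)]]) auto
      then have o: "openin (subtopology Y (F ` topspace X)) (T \<inter> F ` topspace X)"
        by (simp add: openin_subtopology_Int)
      have xt: "x \<in> topspace X" using openin_subset[OF U] x(1) by blast
      then have "F x \<in> topspace Y" using cont by (simp add: continuous_map_def Pi_iff)
      moreover have "F x p = 0" using f0[OF p(1,2)] p(1) unfolding F_def by simp
      ultimately have "z \<in> T \<inter> F ` topspace X"
        using x xt unfolding T_def by auto
      moreover have "T \<inter> F ` topspace X \<subseteq> F ` U"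
      proof
        fix w assume "w \<in> T \<inter> F ` topspace X"
        then obtain y where y: "y \<in> topspace X" "w = F y" "w p < 1" unfolding T_def by auto
        have "y \<in> snd p"
        proof (rule ccontr)
          assume "y \<notin> snd p"
          then have "w p = 1" using f1[of p y] p y unfolding F_def by auto
          then show False using y by simp
        qed
        then show "w \<in> F ` U" using p y by auto
      qed
      ultimately show "\<exists>T. openin (subtopology Y (F ` topspace X)) T \<and> z \<in> T \<and> T \<subseteq> F ` U"
        using o by blast
    qed
  qed
  have emb: "embedding_map X (subtopology Y (F ` topspace X)) F"
    by (rule injective_open_imp_embedding_map[OF _ opn inj])
      (simp add: cont continuous_map_in_subtopology)
  have "metrizable_space Y"
    unfolding Y_def using cP by (simp add: metrizable_space_product_topology metrizable_space_euclidean)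
  then have "metrizable_space (subtopology Y (F ` topspace X))"
    by (simp add: metrizable_space_subtopology)
  moreover have "X homeomorphic_space (subtopology Y (F ` topspace X))"
    using embedding_map_imp_homeomorphic_space[OF emb] by (simp add: subtopology_subtopology)
  ultimately show ?thesis using homeomorphic_metrizable_space by blast
qed

lemma tball_Ln: assumes "snd a = 0" "e > 0" shows "tball a e \<inter> Ln = {a}"
  using ball_sub_Pn[of e "fst a"] assms Pn_Ln_disj unfolding tball_def by (auto simp: Ln_def)

lemma basic_tball: "a \<in> Ln - A \<Longrightarrow> e > 0 \<Longrightarrow> basic_nbhd A a (tball a e)"
  unfolding basic_nbhd_def by blast

lemma tauA_t1:
  fixes A :: "((real^'m) \<times> real) set"
  assumes AL: "A \<subseteq> Ln"
  shows "t1_space (tauA A)"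
  unfolding t1_space_def topspace_tauA[OF AL]
proof (intro ballI impI)
  fix x y :: "(real^'m) \<times> real" assume x: "x \<in> Xn" and "y \<in> Xn" "x \<noteq> y"
  then have "x \<in> ball x (dist x y)" by simp
  then obtain W where W: "basic_nbhd A x W" "W \<subseteq> ball x (dist x y)" using G[OF AL open_ball _ x] by blast
  then have "y \<notin> W" by auto
  then show "\<exists>U. openin (tauA A) U \<and> x \<in> U \<and> y \<notin> U"
    using basic_open[OF AL W(1)] basic_mem[OF AL W(1)] by blast
qed

lemma tauA_regular:
  fixes A :: "((real^'m) \<times> real) set"
  assumes AL: "A \<subseteq> Ln"
  shows "regular_space (tauA A)"
  unfolding neighbourhood_base_of_closedin[symmetric] neighbourhood_base_of
proof (intro allI impI, elim conjE)
  fix W x assume W: "openin (tauA A) W" and x: "x \<in> W"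
  obtain V where V: "basic_nbhd A x V" "V \<subseteq> W" using W x openin_tauA[OF AL] by blast
  have key: "\<exists>U. basic_nbhd A x U \<and> Xn \<inter> closure U \<subseteq> V"
  proof -
    have "x \<in> Pn \<or> x \<in> A \<or> x \<in> Ln - A" using V unfolding basic_nbhd_def by blast
    moreover
    { assume 1: "x \<in> Pn"
      obtain e where e: "0 < e" "e < snd x" "V = ball x e" using basic_P[OF AL 1 V(1)] by blast
      have "basic_nbhd A x (ball x (e/2))" unfolding basic_nbhd_def
        using 1 e by (intro disjI1 conjI exI[of _ "e/2"]) auto
      moreover have "closure (ball x (e/2)) \<subseteq> V" using e by (auto simp: subset_eq)
      ultimately have ?thesis by blast }
    moreover
    { assume 2: "x \<in> A"
      obtain e where e: "0 < e" "V = ball x e \<inter> Xn" using basic_A[OF 2 AL V(1)] by blast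
      have "basic_nbhd A x (ball x (e/2) \<inter> Xn)" unfolding basic_nbhd_def
        using 2 e by (intro disjI2 disjI1 conjI exI[of _ "e/2"]) auto
      moreover have "closure (ball x (e/2) \<inter> Xn) \<subseteq> cball x (e/2)"
        using closure_mono[of "ball x (e/2) \<inter> Xn" "ball x (e/2)"] e by auto
      then have "Xn \<inter> closure (ball x (e/2) \<inter> Xn) \<subseteq> V" using e by (auto simp: subset_eq)
      ultimately have ?thesis by blast }
    moreover
    { assume 3: "x \<in> Ln - A"
      obtain e where e: "0 < e" "V = tball x e" using basic_L[OF 3 V(1)] by blast
      have "basic_nbhd A x (tball x (e/2))" using basic_tball[OF 3] e by simp
      moreover have "closure (tball x (e/2)) = insert x (cball (fst x, e/2) (e/2))"
        unfolding tball_def using e by (simp add: closure_insert)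
      moreover have "Xn \<inter> insert x (cball (fst x, e/2) (e/2)) \<subseteq> V"
      proof
        fix z assume z: "z \<in> Xn \<inter> insert x (cball (fst x, e/2) (e/2))"
        show "z \<in> V"
        proof (cases "z = x")
          case True then show ?thesis using e unfolding tball_def by auto
        next
          case False
          then have "snd z \<ge> 0" "dist (fst x, e/2) z \<le> e/2" using z by (auto simp: Xn_snd)
          then have "z \<in> tball x (2*(e/2))"
            by (intro tball_closure_geom) (use 3 e in \<open>auto simp: Ln_def\<close>)
          then show ?thesis using e by simp
        qed
      qed
      ultimately have ?thesis by metis }
    ultimately show ?thesis by blast
  qed
  then obtain U where U: "basic_nbhd A x U" "Xn \<inter> closure U \<subseteq> V" by blast
  have oU: "openin (tauA A) U" using basic_open[OF AL U(1)] .
  have "U \<subseteq> tauA A closure_of U"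
    using closure_of_subset openin_subset[OF oU] by blast
  moreover have "tauA A closure_of U \<subseteq> W"
    using closure_tauA[OF AL basic_sub_Xn[OF U(1)]] U(2) V(2) by blast
  ultimately show "\<exists>U V. openin (tauA A) U \<and> closedin (tauA A) V \<and> x \<in> U \<and> U \<subseteq> V \<and> V \<subseteq> W"
    using oU basic_mem[OF AL U(1)] closedin_closure_of by blast
qed

lemma small_tball:
  assumes "e > (0::real)"
  obtains k where "tball a (1 / real (Suc k)) \<subseteq> tball a e"
proof -
  obtain n where n: "n > 0" "inverse (real n) < e" using ex_inverse_of_nat_less[OF assms] by blast
  then have "Suc (n - 1) = n" by simp
  then have "tball a (1 / real (Suc (n-1))) \<subseteq> tball a e"
    using n by (intro tball_mono) (auto simp: field_simps)
  then show ?thesis using that by blast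
qed

lemma tauA_second_countable:
  fixes A :: "((real^'m) \<times> real) set"
  assumes AL: "A \<subseteq> Ln" and c: "countable (Ln - A)"
  shows "second_countable (tauA A)"
proof -
  obtain \<B> :: "((real^'m) \<times> real) set set" where cB: "countable \<B>" and tB: "topological_basis \<B>"
    using ex_countable_basis by blast
  define \<C> where "\<C> = (\<lambda>B. B \<inter> Xn) ` \<B> \<union> (\<lambda>p. tball (fst p) (1 / real (Suc (snd p)))) ` ((Ln - A) \<times> (UNIV::nat set))"
  have "countable \<C>" unfolding \<C>_def using cB c by auto
  moreover have "\<forall>V\<in>\<C>. openin (tauA A) V"
  proof
    fix V assume "V \<in> \<C>"
    then consider B where "B \<in> \<B>" "V = B \<inter> Xn" | a k where "a \<in> Ln - A" "V = tball a (1 / real (Suc k))"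
      unfolding \<C>_def by auto
    then show "openin (tauA A) V"
    proof cases
      case 1 then show ?thesis using openE[OF AL] topological_basis_open[OF tB] by auto
    next
      case 2 then show ?thesis using basic_open[OF AL basic_tball[OF 2(1)]] by simp
    qed
  qed
  moreover have "\<forall>U x. openin (tauA A) U \<and> x \<in> U \<longrightarrow> (\<exists>V \<in> \<C>. x \<in> V \<and> V \<subseteq> U)"
  proof (intro allI impI, elim conjE)
    fix U x assume U: "openin (tauA A) U" and x: "x \<in> U"
    obtain V where V: "basic_nbhd A x V" "V \<subseteq> U" using U x openin_tauA[OF AL] by blast
    have xX: "x \<in> Xn" using basic_in_Xn[OF AL V(1)] .
    have "x \<in> Pn \<or> x \<in> A \<or> x \<in> Ln - A" using V unfolding basic_nbhd_def by blast
    moreover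
    { assume "x \<in> Pn \<or> x \<in> A"
      then have "\<exists>e. e > 0 \<and> ball x e \<inter> Xn \<subseteq> V"
      proof
        assume "x \<in> Pn"
        then obtain e where "0 < e" "V = ball x e" using basic_P[OF AL _ V(1)] by blast
        then show ?thesis by blast
      next
        assume "x \<in> A"
        then obtain e where "0 < e" "V = ball x e \<inter> Xn" using basic_A[OF _ AL V(1)] by blast
        then show ?thesis by blast
      qed
      then obtain e where e: "e > 0" "ball x e \<inter> Xn \<subseteq> V" by blast
      obtain B where B: "B \<in> \<B>" "x \<in> B" "B \<subseteq> ball x e"
        using topological_basisE[OF tB open_ball, of x x e] e by auto
      have "B \<inter> Xn \<in> \<C>" unfolding \<C>_def using B(1) by blast
      moreover have "x \<in> B \<inter> Xn" using B xX by blast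
      moreover have "B \<inter> Xn \<subseteq> U" using B(3) e(2) V(2) by blast
      ultimately have "\<exists>V \<in> \<C>. x \<in> V \<and> V \<subseteq> U" by blast }
    moreover
    { assume 3: "x \<in> Ln - A"
      obtain e where e: "0 < e" "V = tball x e" using basic_L[OF 3 V(1)] by blast
      obtain k where k: "tball x (1 / real (Suc k)) \<subseteq> tball x e" using small_tball[OF e(1)] by blast
      have "tball x (1 / real (Suc k)) \<in> \<C>" unfolding \<C>_def
        by (rule UnI2, rule image_eqI[of _ _ "(x,k)"]) (use 3 in auto)
      moreover have "x \<in> tball x (1 / real (Suc k))" unfolding tball_def by simp
      ultimately have "\<exists>V \<in> \<C>. x \<in> V \<and> V \<subseteq> U" using k e V(2) by blast }
    ultimately show "\<exists>V \<in> \<C>. x \<in> V \<and> V \<subseteq> U" by blast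
  qed
  ultimately show ?thesis unfolding second_countable_def by blast
qed

lemma tauA_hL_countable:
  fixes A :: "((real^'m) \<times> real) set"
  assumes AL: "A \<subseteq> Ln" and h: "hereditarily_Lindelof (tauA A)"
  shows "countable (Ln - A)"
proof -
  let ?S = "Ln - A"
  have SX: "?S \<subseteq> topspace (tauA A)" using topspace_tauA[OF AL] by (auto simp: Xn_def)
  then have L: "Lindelof_space (subtopology (tauA A) ?S)" using h unfolding hereditarily_Lindelof_def by blast
  have ts: "topspace (subtopology (tauA A) ?S) = ?S" using SX by auto
  have sing: "tball a 1 \<inter> ?S = {a}" if "a \<in> ?S" for a
    using tball_Ln[of a 1] that by (auto simp: Ln_def tball_def)
  let ?U = "(\<lambda>a. tball a 1 \<inter> ?S) ` ?S"
  have o: "\<forall>U\<in>?U. openin (subtopology (tauA A) ?S) U"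
  proof
    fix U assume "U \<in> ?U"
    then obtain a where a: "a \<in> ?S" "U = tball a 1 \<inter> ?S" by blast
    show "openin (subtopology (tauA A) ?S) U"
      unfolding a(2) by (rule openin_subtopology_Int[OF basic_open[OF AL basic_tball[OF a(1)]]]) simp
  qed
  have u: "\<Union>?U = topspace (subtopology (tauA A) ?S)" using ts sing by auto
  obtain \<V> where V: "countable \<V>" "\<V> \<subseteq> ?U" "\<Union>\<V> = topspace (subtopology (tauA A) ?S)"
    using L[unfolded Lindelof_space_def, rule_format, OF conjI[OF o u]] by blast
  have "\<forall>V\<in>\<V>. countable V" using V(2) sing by auto
  then have "countable (\<Union>\<V>)" using V(1) countable_UN[of \<V> "\<lambda>V. V"] by simp
  then show ?thesis using V(3) ts by simp
qed

lemma tauA_open_has_ball: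
  fixes A :: "((real^'m) \<times> real) set"
  assumes AL: "A \<subseteq> Ln" and U: "openin (tauA A) U" and x: "x \<in> U"
  shows "\<exists>c r. r > 0 \<and> ball c r \<subseteq> U"
proof -
  obtain V where V: "basic_nbhd A x V" "V \<subseteq> U" using U x openin_tauA[OF AL] by blast
  have "x \<in> Pn \<or> x \<in> A \<or> x \<in> Ln - A" using V unfolding basic_nbhd_def by blast
  moreover
  { assume 1: "x \<in> Pn"
    obtain e where e: "0 < e" "e < snd x" "V = ball x e" using basic_P[OF AL 1 V(1)] by blast
    then have ?thesis using V(2) by blast }
  moreover
  { assume 2: "x \<in> A"
    obtain e where e: "0 < e" "V = ball x e \<inter> Xn" using basic_A[OF 2 AL V(1)] by blast
    have "snd x = 0" using 2 AL by (auto simp: Ln_def)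
    then have "tball x (e/2) \<subseteq> ball x (2*(e/2))" using e by (intro tball_sub_ball) auto
    moreover have "ball (fst x, e/2) (e/2) \<subseteq> tball x (e/2)" unfolding tball_def by auto
    moreover have "ball (fst x, e/2) (e/2) \<subseteq> Xn" using ball_sub_Pn[of "e/2" "fst x"] e by (auto simp: Xn_def)
    ultimately have "ball (fst x, e/2) (e/2) \<subseteq> V" using e by auto
    then have ?thesis using V(2) e by (meson half_gt_zero order_trans) }
  moreover
  { assume 3: "x \<in> Ln - A"
    obtain e where e: "0 < e" "V = tball x e" using basic_L[OF 3 V(1)] by blast
    then have "ball (fst x, e) e \<subseteq> V" unfolding tball_def by auto
    then have ?thesis using V(2) e by (meson order_trans) }
  ultimately show ?thesis by blast
qed

lemma tauA_metrizable_countable: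
  fixes A :: "((real^'m) \<times> real) set"
  assumes AL: "A \<subseteq> Ln" and h: "metrizable_space (tauA A)"
  shows "countable (Ln - A)"
proof -
  obtain M d where md: "Metric_space M d" and eq: "tauA A = Metric_space.mtopology M d"
    using h unfolding metrizable_space_def by blast
  interpret m: Metric_space M d by (rule md)
  have MX: "M = Xn" using topspace_tauA[OF AL] eq by simp
  obtain \<B> :: "((real^'m) \<times> real) set set" where cB: "countable \<B>" and tB: "topological_basis \<B>"
    using ex_countable_basis by blast
  define D where "D = (\<lambda>B. SOME z. z \<in> B) ` \<B>"
  have cD: "countable D" unfolding D_def using cB by auto
  have dense: "\<exists>q\<in>D. q \<in> U" if UU: "openin (tauA A) U" "x \<in> U" for U x
  proof -
    obtain c r where cr: "r > 0" "ball c r \<subseteq> U" using tauA_open_has_ball[OF AL UU] by blast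
    obtain B where B: "B \<in> \<B>" "c \<in> B" "B \<subseteq> ball c r"
      using topological_basisE[OF tB open_ball, of c c r] cr by auto
    then have "(SOME z. z \<in> B) \<in> B" by (meson someI)
    then show ?thesis unfolding D_def using B cr by blast
  qed
  have "\<forall>a\<in>Ln - A. \<exists>k::nat. m.mball a (1 / real (Suc k)) \<subseteq> tball a 1"
  proof
    fix a assume a: "a \<in> Ln - A"
    have "openin m.mtopology (tball a 1)" using basic_open[OF AL basic_tball[OF a]] eq by simp
    moreover have "a \<in> tball a 1" unfolding tball_def by simp
    ultimately obtain r where r: "r > 0" "m.mball a r \<subseteq> tball a 1"
      using m.openin_mtopology by blast
    obtain n where n: "n > 0" "inverse (real n) < r" using ex_inverse_of_nat_less[OF r(1)] by blast
    then have "Suc (n - 1) = n" by simp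
    then have "m.mball a (1 / real (Suc (n-1))) \<subseteq> m.mball a r"
      using n by (intro m.mball_subset_concentric) (auto simp: field_simps)
    then show "\<exists>k::nat. m.mball a (1 / real (Suc k)) \<subseteq> tball a 1" using r by blast
  qed
  then obtain k where k: "\<And>a. a \<in> Ln - A \<Longrightarrow> m.mball a (1 / real (Suc (k a))) \<subseteq> tball a 1"
    by metis
  have "\<forall>a\<in>Ln - A. \<exists>q\<in>D. q \<in> m.mball a (1 / (2 * real (Suc (k a))))"
  proof
    fix a assume a: "a \<in> Ln - A"
    then have "a \<in> M" using MX by (auto simp: Xn_def)
    then have "a \<in> m.mball a (1 / (2 * real (Suc (k a))))" by simp
    moreover have "openin (tauA A) (m.mball a (1 / (2 * real (Suc (k a)))))" using eq by simp
    ultimately show "\<exists>q\<in>D. q \<in> m.mball a (1 / (2 * real (Suc (k a))))" using dense by blast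
  qed
  then obtain q where q: "\<And>a. a \<in> Ln - A \<Longrightarrow> q a \<in> D \<and> q a \<in> m.mball a (1 / (2 * real (Suc (k a))))"
    by metis
  define g where "g a = (q a, k a)" for a
  have "inj_on g (Ln - A)"
  proof (rule inj_onI)
    fix a b assume a: "a \<in> Ln - A" and b: "b \<in> Ln - A" and gab: "g a = g b"
    then have qq: "q a = q b" and kk: "k a = k b" unfolding g_def by auto
    let ?r = "1 / (2 * real (Suc (k a)))"
    have "d a (q a) < ?r" "d b (q a) < ?r" "a \<in> M" "b \<in> M" "q a \<in> M"
      using q[OF a] q[OF b] qq kk by auto
    then have "d a b < 2 * ?r" using m.triangle[of a "q a" b] m.commute[of b "q a"] by linarith
    also have "2 * ?r = 1 / real (Suc (k a))" by (simp add: field_simps)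
    finally have "b \<in> m.mball a (1 / real (Suc (k a)))" using \<open>a \<in> M\<close> \<open>b \<in> M\<close> by simp
    then have "b \<in> tball a 1" using k[OF a] by blast
    then have "b \<in> tball a 1 \<inter> Ln" using b by blast
    then show "a = b" using tball_Ln[of a 1] a by (auto simp: Ln_def)
  qed
  moreover have "countable (g ` (Ln - A))"
  proof (rule countable_subset)
    show "g ` (Ln - A) \<subseteq> D \<times> UNIV" unfolding g_def using q by auto
    show "countable (D \<times> (UNIV :: nat set))" using cD by auto
  qed
  ultimately show ?thesis using countable_image_inj_on by blast
qed

theorem mainTheorem2:
  fixes A :: "((real^'m) \<times> real) set"
  assumes "A \<subseteq> Ln"
  shows "(hereditarily_Lindelof (tauA A) \<longleftrightarrow> countable (Ln - A))
       \<and> (countable (Ln - A) \<longleftrightarrow> second_countable (tauA A))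
       \<and> (countable (Ln - A) \<longleftrightarrow> metrizable_space (tauA A))"
proof -
  have sc_hl: "hereditarily_Lindelof (tauA A)" if "second_countable (tauA A)"
    unfolding hereditarily_Lindelof_def
    using that second_countable_subtopology second_countable_imp_Lindelof_space by blast
  have sc: "second_countable (tauA A)" if "countable (Ln - A)"
    using tauA_second_countable[OF assms that] .
  have hc: "countable (Ln - A)" if "hereditarily_Lindelof (tauA A)"
    using tauA_hL_countable[OF assms that] .
  have mc: "countable (Ln - A)" if "metrizable_space (tauA A)"
    using tauA_metrizable_countable[OF assms that] .
  have cm: "metrizable_space (tauA A)" if "countable (Ln - A)"
    using Urysohn_metrization[OF tauA_regular[OF assms] sc[OF that] tauA_t1[OF assms]] .
  show ?thesis using sc_hl sc hc mc cm by blast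
qed

end
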